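(* The function $Q:Z_0\to\mathbb{R}$, $Q(z)=\lambda_{\max}(M(z))$, is convex.
   Context: Let $n\ge2$, $\mathcal S_0^{n\times n}$ the trace-free symmetric matrices, $Z:=\mathbb{R}\times\mathbb{R}^n\times\mathbb{R}^n\times\mathcal S_0^{n\times n}\times\mathbb{R}$ with elements $z=(\rho,v,m,\sigma,p)$, $Z_0:=\{z\in Z:\rho\in(-1,1)\}$ (a convex set). For $z\in Z_0$, $M(z):=\frac{v\otimes v-\rho(m\otimes v+v\otimes m)+m\otimes m}{1-\rho^2}-\sigma$ and $\lambda_{\max}$ denotes the maximal eigenvalue of a symmetric matrix. *)

theory Defs
  imports "HOL-Analysis.Analysis"
begin

definition outer :: "real^'n \<Rightarrow> real^'n \<Rightarrow> real^'n^'n" where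
  "outer v w = (\<chi> i j. v $ i * w $ j)"

definition symmetric_mat :: "real^'n^'n \<Rightarrow> bool" where
  "symmetric_mat A \<longleftrightarrow> transpose A = A"

definition trace_free :: "real^('n::finite)^'n \<Rightarrow> bool" where
  "trace_free A \<longleftrightarrow> (\<Sum>i\<in>UNIV. A $ i $ i) = 0"

definition eigenvalues :: "real^'n^'n \<Rightarrow> real set" where
  "eigenvalues A = {l. \<exists>x. x \<noteq> 0 \<and> A *v x = l *\<^sub>R x}"

definition lambda_max :: "real^'n^'n \<Rightarrow> real" where
  "lambda_max A = Max (eigenvalues A)"

text \<open>The space Z = R x R^n x R^n x S_0^{n x n} x R, realised inside the ambient
  real vector space R x R^n x R^n x R^{n x n} x R, and the convex subset Z_0.\<close>
type_synonym 'n zspace = "real \<times> (real^'n) \<times> (real^'n) \<times> (real^'n^'n) \<times> real"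

definition Z0 :: "('n::finite) zspace set" where
  "Z0 = {(\<rho>, v, m, \<sigma>, p). -1 < \<rho> \<and> \<rho> < 1 \<and> symmetric_mat \<sigma> \<and> trace_free \<sigma>}"

definition Mmat :: "('n::finite) zspace \<Rightarrow> real^'n^'n" where
  "Mmat z = (case z of (\<rho>, v, m, \<sigma>, p) \<Rightarrow>
     (1 / (1 - \<rho>^2)) *\<^sub>R (outer v v - \<rho> *\<^sub>R (outer m v + outer v m) + outer m m) - \<sigma>)"

definition Qfun :: "('n::finite) zspace \<Rightarrow> real" where
  "Qfun z = lambda_max (Mmat z)"

end

theory Submission
  imports Defs
begin

lemma sym_inner:
  assumes "transpose A = (A::real^'n^'n)"
  shows "x \<bullet> (A *v y) = y \<bullet> (A *v x)"
  by (metis assms dot_lmul_matrix inner_commute transpose_matrix_vector)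

lemma quad_nonpos_lin0:
  fixes c d :: real
  assumes "\<And>t. c * t + d * t^2 \<le> 0"
  shows "c = 0"
proof -
  define e where "e = 1 / (\<bar>d\<bar> + 1)"
  have e: "e > 0" "\<bar>d\<bar> * e < 1" unfolding e_def by (auto simp: field_simps)
  have "- d * e \<le> \<bar>d\<bar> * e" using e by (intro mult_right_mono) auto
  then have "1 + d * e > 0" using e by linarith
  have "c * (c*e) + d * (c*e)^2 = c^2 * e * (1 + d * e)" by (simp add: algebra_simps power2_eq_square)
  with assms[of "c*e"] have "c^2 * e * (1 + d*e) \<le> 0" by simp
  with e \<open>1 + d * e > 0\<close> have "c^2 \<le> 0"
    by (smt (verit) mult_pos_pos zero_less_power2)
  then show ?thesis by simp
qed

lemma cont_quad: "continuous_on S (\<lambda>x. x \<bullet> ((A::real^'n^'n) *v x))"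
  by (intro continuous_intros linear_continuous_on matrix_vector_mul_linear bounded_linear_intros)

lemma rayleigh:
  assumes sym: "transpose A = (A::real^'n^'n)"
  shows "\<exists>u l. u \<noteq> 0 \<and> A *v u = l *\<^sub>R u \<and> (\<forall>x. x \<bullet> (A *v x) \<le> l * (x \<bullet> x))"
proof -
  have ne: "sphere (0::real^'n) 1 \<noteq> {}" by simp
  obtain u where u: "u \<in> sphere 0 1" and umax: "\<And>y. y \<in> sphere 0 1 \<Longrightarrow> y \<bullet> (A *v y) \<le> u \<bullet> (A *v u)"
    using continuous_attains_sup[OF compact_sphere ne cont_quad] by blast
  define l where "l = u \<bullet> (A *v u)"
  have uu: "u \<bullet> u = 1" using u by (simp add: dot_square_norm)
  have bound: "x \<bullet> (A *v x) \<le> l * (x \<bullet> x)" for x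
  proof (cases "x = 0")
    case True then show ?thesis by simp
  next
    case False
    define y where "y = (1 / norm x) *\<^sub>R x"
    have "y \<in> sphere 0 1" using False by (simp add: y_def)
    then have "y \<bullet> (A *v y) \<le> l" using umax l_def by simp
    moreover have "y \<bullet> (A *v y) = (x \<bullet> (A *v x)) / (norm x)^2"
      by (simp add: y_def matrix_vector_mult_scaleR power2_eq_square)
    moreover have "x \<bullet> x = (norm x)^2" by (simp add: dot_square_norm)
    moreover have "norm x > 0" using False by simp
    ultimately show ?thesis by (simp add: field_simps)
  qed
  define w where "w = A *v u - l *\<^sub>R u"
  have "2 * (w \<bullet> w) = 0"
  proof (rule quad_nonpos_lin0)
    fix t :: real
    have "(u + t *\<^sub>R w) \<bullet> (A *v (u + t *\<^sub>R w)) - l * ((u + t *\<^sub>R w) \<bullet> (u + t *\<^sub>R w))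
        = (u \<bullet> (A *v u) - l * (u \<bullet> u)) + t * (u \<bullet> (A *v w) + w \<bullet> (A *v u) - 2 * l * (u \<bullet> w))
          + t^2 * (w \<bullet> (A *v w) - l * (w \<bullet> w))"
      by (simp add: matrix_vector_right_distrib matrix_vector_mult_scaleR inner_add inner_commute
          algebra_simps power2_eq_square)
    also have "u \<bullet> (A *v w) = w \<bullet> (A *v u)" using sym_inner[OF sym] .
    also have "w \<bullet> (A *v u) + w \<bullet> (A *v u) - 2 * l * (u \<bullet> w) = 2 * (w \<bullet> w)"
      unfolding w_def by (simp add: inner_diff_right inner_diff_left inner_commute algebra_simps)
    finally show "2 * (w \<bullet> w) * t + (w \<bullet> (A *v w) - l * (w \<bullet> w)) * t^2 \<le> 0"
      using bound[of "u + t *\<^sub>R w"] uu l_def by (simp add: algebra_simps)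
  qed
  then have "w = 0" by simp
  then show ?thesis using u bound unfolding w_def by (intro exI[of _ u] exI[of _ l]) auto
qed

lemma eig_finite:
  assumes sym: "transpose A = (A::real^'n^'n)"
  shows "finite (eigenvalues A)"
proof -
  define e where "e l = (SOME x. x \<noteq> 0 \<and> A *v x = l *\<^sub>R x)" for l
  have e: "e l \<noteq> 0 \<and> A *v e l = l *\<^sub>R e l" if "l \<in> eigenvalues A" for l
  proof -
    have "\<exists>x. x \<noteq> 0 \<and> A *v x = l *\<^sub>R x" using that unfolding eigenvalues_def by simp
    then show ?thesis unfolding e_def by (rule someI_ex)
  qed
  have inj: "inj_on e (eigenvalues A)"
  proof (rule inj_onI)
    fix l1 l2 assume "l1 \<in> eigenvalues A" "l2 \<in> eigenvalues A" "e l1 = e l2"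
    then have "l1 *\<^sub>R e l1 = l2 *\<^sub>R e l1" "e l1 \<noteq> 0" using e by metis+
    then show "l1 = l2" by simp
  qed
  have po: "pairwise orthogonal (e ` eigenvalues A)"
  proof (clarsimp simp: pairwise_def orthogonal_def)
    fix l1 l2 assume l: "l1 \<in> eigenvalues A" "l2 \<in> eigenvalues A" "e l1 \<noteq> e l2"
    then have "l1 \<noteq> l2" by auto
    have "l1 * (e l1 \<bullet> e l2) = (A *v e l1) \<bullet> e l2" using e[OF l(1)] by simp
    also have "\<dots> = e l1 \<bullet> (A *v e l2)" using sym_inner[OF sym] by (simp add: inner_commute)
    also have "\<dots> = l2 * (e l1 \<bullet> e l2)" using e[OF l(2)] by simp
    finally show "e l1 \<bullet> e l2 = 0" using \<open>l1 \<noteq> l2\<close> by simp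
  qed
  have "0 \<notin> e ` eigenvalues A" using e by auto
  then have "independent (e ` eigenvalues A)" using po pairwise_orthogonal_independent by blast
  then have "finite (e ` eigenvalues A)" using finiteI_independent by blast
  then show ?thesis using inj finite_imageD by blast
qed

lemma lambda_max_char:
  assumes sym: "transpose A = (A::real^'n^'n)"
  shows "\<exists>u. u \<noteq> 0 \<and> u \<bullet> (A *v u) = lambda_max A * (u \<bullet> u)"
    and "x \<bullet> (A *v x) \<le> lambda_max A * (x \<bullet> x)"
proof -
  obtain u l where ul: "u \<noteq> 0" "A *v u = l *\<^sub>R u" "\<forall>x. x \<bullet> (A *v x) \<le> l * (x \<bullet> x)"
    using rayleigh[OF sym] by blast
  have lin: "l \<in> eigenvalues A" using ul unfolding eigenvalues_def by auto
  have "k \<le> l" if kin: "k \<in> eigenvalues A" for k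
  proof -
    obtain y where y: "y \<noteq> 0" "A *v y = k *\<^sub>R y" using kin unfolding eigenvalues_def by auto
    have "k * (y \<bullet> y) \<le> l * (y \<bullet> y)" using ul(3)[rule_format, of y] y by simp
    moreover have "y \<bullet> y > 0" using y by simp
    ultimately show ?thesis by (simp add: mult_le_cancel_right)
  qed
  then have "lambda_max A = l" unfolding lambda_max_def
    using lin eig_finite[OF sym] by (intro Max_eqI) auto
  then show "\<exists>u. u \<noteq> 0 \<and> u \<bullet> (A *v u) = lambda_max A * (u \<bullet> u)"
    and "x \<bullet> (A *v x) \<le> lambda_max A * (x \<bullet> x)" using ul by auto
qed

lemma mv_add: "((A::real^'n^'m) + B) *v x = A *v x + B *v x"
  by (simp add: matrix_vector_mult_def vec_eq_iff sum.distrib algebra_simps)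
lemma mv_diff: "((A::real^'n^'m) - B) *v x = A *v x - B *v x"
  by (simp add: matrix_vector_mult_def vec_eq_iff sum_subtractf algebra_simps)
lemma mv_scale: "(c *\<^sub>R (A::real^'n^'m)) *v x = c *\<^sub>R (A *v x)"
  by (simp add: matrix_vector_mult_def vec_eq_iff sum_distrib_left algebra_simps)
lemma outer_mv: "outer v w *v x = (w \<bullet> x) *\<^sub>R v"
  by (simp add: outer_def matrix_vector_mult_def vec_eq_iff inner_vec_def sum_distrib_left algebra_simps)

definition fq :: "real \<Rightarrow> real \<Rightarrow> real \<Rightarrow> real" where
  "fq r a b = (a^2 - 2*r*a*b + b^2) / (1 - r^2)"

lemma quadM: "x \<bullet> (Mmat (r,v,m,s,p) *v x) = fq r (v \<bullet> x) (m \<bullet> x) - x \<bullet> (s *v x)"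
  by (simp add: Mmat_def fq_def mv_add mv_diff mv_scale outer_mv inner_add_right inner_diff_right
      inner_commute power2_eq_square algebra_simps add_divide_distrib diff_divide_distrib)

lemma qol:
  fixes c1 c2 y1 y2 t :: real
  assumes "y1 > 0" "y2 > 0" "0 \<le> t" "t \<le> 1"
  shows "((1-t)*c1 + t*c2)^2 / ((1-t)*y1 + t*y2) \<le> (1-t)*c1^2/y1 + t*c2^2/y2"
proof -
  have Y: "(1-t)*y1 + t*y2 > 0"
    using assms by (smt (verit) mult_nonneg_nonneg mult_pos_pos)
  have "(1-t)*c1^2/y1 + t*c2^2/y2 - ((1-t)*c1 + t*c2)^2 / ((1-t)*y1 + t*y2)
      = t*(1-t)*(c1*y2 - c2*y1)^2 / (y1*y2*((1-t)*y1 + t*y2))"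
    using assms Y by (simp add: field_simps) (simp add: algebra_simps power2_eq_square)
  also have "\<dots> \<ge> 0" using assms Y by (intro divide_nonneg_pos mult_nonneg_nonneg) auto
  finally show ?thesis by simp
qed

lemma fq_split: "-1 < r \<Longrightarrow> r < 1 \<Longrightarrow> fq r a b = (a+b)^2 / (2*(1+r)) + (a-b)^2/(2*(1-r))"
proof -
  assume r: "-1 < r" "r < 1"
  have h: "1 - r^2 = (1+r)*(1-r)" by (simp add: algebra_simps power2_eq_square)
  have "1 + r \<noteq> 0" "1 - r \<noteq> 0" using r by auto
  then have e: "(a+b)^2/(2*(1+r)) + (a-b)^2/(2*(1-r))
      = ((a+b)^2*(1-r) + (a-b)^2*(1+r)) / (2*((1+r)*(1-r)))"
  proof -
    have g: "X/(2*p) + Y/(2*q) = (X*q + Y*p)/(2*(p*q))" if "p \<noteq> 0" "q \<noteq> 0" for X Y p q :: real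
      using that by (simp add: field_simps)
    show ?thesis using g[of "1+r" "1-r" "(a+b)^2" "(a-b)^2"] \<open>1 + r \<noteq> 0\<close> \<open>1 - r \<noteq> 0\<close> by simp
  qed
  have n: "(a+b)^2*(1-r) + (a-b)^2*(1+r) = 2 * (a^2 - 2*r*a*b + b^2)"
    by (simp add: algebra_simps power2_eq_square)
  show ?thesis unfolding fq_def e n h
    using mult_divide_mult_cancel_left[of "2::real" "a^2 - 2*r*a*b + b^2" "(1+r)*(1-r)"] by simp
qed

lemma fq_convex:
  assumes "-1 < r1" "r1 < 1" "-1 < r2" "r2 < 1" "0 \<le> t" "t \<le> 1"
  shows "fq ((1-t)*r1 + t*r2) ((1-t)*a1 + t*a2) ((1-t)*b1 + t*b2) \<le> (1-t) * fq r1 a1 b1 + t * fq r2 a2 b2"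
proof -
  let ?r = "(1-t)*r1 + t*r2"
  have "(1-t)*r1 \<le> (1-t) * max r1 r2" "t*r2 \<le> t * max r1 r2"
       "(1-t)*r1 \<ge> (1-t) * min r1 r2" "t*r2 \<ge> t * min r1 r2"
    using assms by (auto intro: mult_left_mono)
  then have "?r \<le> max r1 r2" "?r \<ge> min r1 r2" by (simp_all add: algebra_simps)
  then have r: "-1 < ?r" "?r < 1" using assms by auto
  have 1: "((1-t)*a1 + t*a2 + ((1-t)*b1 + t*b2))^2 / (2*(1+?r))
     \<le> (1-t)*(a1+b1)^2/(2*(1+r1)) + t*(a2+b2)^2/(2*(1+r2))"
    using qol[of "2*(1+r1)" "2*(1+r2)" t "a1+b1" "a2+b2"] assms
    by (simp add: algebra_simps)
  have 2: "((1-t)*a1 + t*a2 - ((1-t)*b1 + t*b2))^2 / (2*(1-?r))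
     \<le> (1-t)*(a1-b1)^2/(2*(1-r1)) + t*(a2-b2)^2/(2*(1-r2))"
    using qol[of "2*(1-r1)" "2*(1-r2)" t "a1-b1" "a2-b2"] assms
    by (simp add: algebra_simps)
  show ?thesis using 1 2 r assms
    by (simp add: fq_split algebra_simps add_divide_distrib)
qed

lemma Mmat_sym:
  assumes "symmetric_mat s"
  shows "transpose (Mmat (r,v,m,s,p)) = Mmat (r,v,m,s,p)"
proof -
  have "s $ j $ i = s $ i $ j" for i j
    using assms unfolding symmetric_mat_def by (metis transpose_def vec_lambda_beta)
  then show ?thesis
    by (simp add: Mmat_def transpose_def outer_def vec_eq_iff algebra_simps)
qed

lemma transp_add: "transpose ((A::real^'n^'n) + B) = transpose A + transpose B"
  by (simp add: transpose_def vec_eq_iff)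

lemma convex_Z0: "convex (Z0 :: ('n::finite) zspace set)"
proof (rule convexI)
  fix x y :: "'n zspace" and u v :: real
  assume x: "x \<in> Z0" and y: "y \<in> Z0" and uv: "0 \<le> u" "0 \<le> v" "u + v = 1"
  obtain r1 v1 m1 s1 p1 where x': "x = (r1,v1,m1,s1,p1)" by (cases x) auto
  obtain r2 v2 m2 s2 p2 where y': "y = (r2,v2,m2,s2,p2)" by (cases y) auto
  have h1: "-1 < r1" "r1 < 1" "symmetric_mat s1" "trace_free s1" using x unfolding x' Z0_def by auto
  have h2: "-1 < r2" "r2 < 1" "symmetric_mat s2" "trace_free s2" using y unfolding y' Z0_def by auto
  have "u * r1 \<le> u * max r1 r2" "v * r2 \<le> v * max r1 r2"
       "u * r1 \<ge> u * min r1 r2" "v * r2 \<ge> v * min r1 r2"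
    using uv by (auto intro: mult_left_mono)
  moreover have "u * max r1 r2 + v * max r1 r2 = max r1 r2" "u * min r1 r2 + v * min r1 r2 = min r1 r2"
    using uv by (metis distrib_right mult_1)+
  ultimately have "u * r1 + v * r2 \<le> max r1 r2" "u * r1 + v * r2 \<ge> min r1 r2" by linarith+
  then have r: "-1 < u * r1 + v * r2" "u * r1 + v * r2 < 1" using h1 h2 by auto
  have sym: "symmetric_mat (u *\<^sub>R s1 + v *\<^sub>R s2)"
    using h1(3) h2(3) unfolding symmetric_mat_def by (simp add: transpose_scalar transp_add)
  have tf: "trace_free (u *\<^sub>R s1 + v *\<^sub>R s2)"
    using h1(4) h2(4) unfolding trace_free_def by (simp add: sum.distrib sum_distrib_left[symmetric])
  show "u *\<^sub>R x + v *\<^sub>R y \<in> Z0"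
    using r sym tf by (simp add: x' y' Z0_def)
qed

lemma quad_convex:
  assumes "(r1,v1,m1,s1,p1) \<in> Z0" "(r2,v2,m2,s2,p2) \<in> (Z0 :: ('n::finite) zspace set)" "0 \<le> t" "t \<le> 1"
  shows "x \<bullet> (Mmat ((1-t) *\<^sub>R (r1,v1,m1,s1,p1) + t *\<^sub>R (r2,v2,m2,s2,p2)) *v x)
     \<le> (1-t) * (x \<bullet> (Mmat (r1,v1,m1,s1,p1) *v x)) + t * (x \<bullet> (Mmat (r2,v2,m2,s2,p2) *v x))"
proof -
  have h: "-1 < r1" "r1 < 1" "-1 < r2" "r2 < 1" using assms(1,2) unfolding Z0_def by auto
  have "fq ((1-t)*r1 + t*r2) ((1-t)*(v1 \<bullet> x) + t*(v2 \<bullet> x)) ((1-t)*(m1 \<bullet> x) + t*(m2 \<bullet> x))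
     \<le> (1-t) * fq r1 (v1 \<bullet> x) (m1 \<bullet> x) + t * fq r2 (v2 \<bullet> x) (m2 \<bullet> x)"
    using fq_convex h assms(3,4) by blast
  moreover have "x \<bullet> (((1-t) *\<^sub>R s1 + t *\<^sub>R s2) *v x) = (1-t) * (x \<bullet> (s1 *v x)) + t * (x \<bullet> (s2 *v x))"
    by (simp add: mv_add mv_scale inner_add_right)
  ultimately show ?thesis
    by (simp add: quadM inner_add_left algebra_simps)
qed

theorem lemma3p7:
  assumes "CARD('n::finite) \<ge> 2"
  shows "convex_on (Z0 :: 'n zspace set) Qfun"
proof (rule convex_onI)
  show "convex (Z0 :: 'n zspace set)" by (rule convex_Z0)
next
  fix t :: real and z1 z2 :: "'n zspace"
  assume t: "0 < t" "t < 1" and z1: "z1 \<in> Z0" and z2: "z2 \<in> Z0"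
  obtain r1 v1 m1 s1 p1 where z1': "z1 = (r1,v1,m1,s1,p1)" by (cases z1) auto
  obtain r2 v2 m2 s2 p2 where z2': "z2 = (r2,v2,m2,s2,p2)" by (cases z2) auto
  define z where "z = (1 - t) *\<^sub>R z1 + t *\<^sub>R z2"
  have zZ: "z \<in> Z0" unfolding z_def using convex_Z0 z1 z2 t
    unfolding convex_def by (metis add.commute diff_add_cancel less_eq_real_def diff_ge_0_iff_ge)
  have symz: "transpose (Mmat z) = Mmat z"
    using zZ Mmat_sym unfolding Z0_def by auto
  have sym1: "transpose (Mmat z1) = Mmat z1"
    using z1 Mmat_sym unfolding Z0_def by auto
  have sym2: "transpose (Mmat z2) = Mmat z2"
    using z2 Mmat_sym unfolding Z0_def by auto
  obtain u where u: "u \<noteq> 0" "u \<bullet> (Mmat z *v u) = lambda_max (Mmat z) * (u \<bullet> u)"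
    using lambda_max_char(1)[OF symz] by blast
  have uu: "u \<bullet> u > 0" using u by simp
  have "Qfun z * (u \<bullet> u) = u \<bullet> (Mmat z *v u)" using u by (simp add: Qfun_def)
  also have "\<dots> \<le> (1-t) * (u \<bullet> (Mmat z1 *v u)) + t * (u \<bullet> (Mmat z2 *v u))"
    unfolding z_def z1' z2' using quad_convex[of r1 v1 m1 s1 p1 r2 v2 m2 s2 p2 t u] z1 z2 t
    unfolding z1' z2' by simp
  also have "\<dots> \<le> (1-t) * (Qfun z1 * (u \<bullet> u)) + t * (Qfun z2 * (u \<bullet> u))"
    unfolding Qfun_def using t lambda_max_char(2)[OF sym1, of u] lambda_max_char(2)[OF sym2, of u]
    by (intro add_mono mult_left_mono) auto
  also have "\<dots> = ((1-t) * Qfun z1 + t * Qfun z2) * (u \<bullet> u)" by (simp add: algebra_simps)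
  finally show "Qfun ((1 - t) *\<^sub>R z1 + t *\<^sub>R z2) \<le> (1 - t) * Qfun z1 + t * Qfun z2"
    using uu unfolding z_def by (simp add: mult_le_cancel_right)
qed

end
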